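(* Let $w$ be a standard Gaussian real random variable and $T\in\mathbb{N}^*$. There exists a constant $C_T>0$ depending only on $T$ such that for all $\mathbf{a}\in\mathbb{R}^{T+1}$ and all $t>0$, \[\frac1{C_T}\exp(-C_T\eta(t))\le\mathbb{P}\big(|f^2(\mathbf{a},w)-\mathbb{E}f^2(\mathbf{a},w)|\ge t\big)\le C_T\exp\Big(-\frac1{C_T}\eta(t)\Big),\] where \[\eta(t)=\min_{1\le p\le k\le 2T}\left(\frac{t}{\left|\mathbb{E}\frac{\partial^k (f^2)}{\partial w^k}(\mathbf{a},w)\right|}\right)^{2/p}.\]
   Context: $f(\mathbf{a},w)=\sum_{t=0}^Ta_{T-t}w^t$ for $\mathbf{a}=(a_t)_{0\le t\le T}$, and $f^2(\mathbf{a},w)=f(\mathbf{a},w)^2$, viewed as a polynomial in $w$ of degree at most $2T$. A term with vanishing denominator is interpreted as $+\infty$. *)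

theory Defs
  imports "HOL-Probability.Probability"
begin

text \<open>f(a,w) = sum_{t=0}^T a_{T-t} w^t, coefficients a_0..a_T (other indices irrelevant).\<close>
definition fpol :: "nat \<Rightarrow> (nat \<Rightarrow> real) \<Rightarrow> real \<Rightarrow> real" where
  "fpol T a w = (\<Sum>t=0..T. a (T - t) * w ^ t)"

definition fsq :: "nat \<Rightarrow> (nat \<Rightarrow> real) \<Rightarrow> real \<Rightarrow> real" where
  "fsq T a w = (fpol T a w)^2"

definition gauss :: "real measure" where
  "gauss = density lborel std_normal_density"

definition Ederiv :: "nat \<Rightarrow> (nat \<Rightarrow> real) \<Rightarrow> nat \<Rightarrow> real" where
  "Ederiv T a k = integral\<^sup>L gauss ((deriv ^^ k) (fsq T a))"

definition eta :: "nat \<Rightarrow> (nat \<Rightarrow> real) \<Rightarrow> real \<Rightarrow> ereal" where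
  "eta T a t = Min ((\<lambda>(p,k). if Ederiv T a k = 0 then \<infinity>
                     else ereal ((t / \<bar>Ederiv T a k\<bar>) powr (2 / real p)))
                   ` {(p,k). 1 \<le> p \<and> p \<le> k \<and> k \<le> 2*T})"

definition exp_neg :: "real \<Rightarrow> ereal \<Rightarrow> real" where
  "exp_neg c e = (if e = \<infinity> then 0 else exp (- c * real_of_ereal e))"

end

theory Submission imports Defs "HOL-Computational_Algebra.Polynomial" begin


lemma gauss_prob: "prob_space gauss"
  unfolding gauss_def using prob_space_normal_density[of 1 0] by simp

lemma sets_gauss[simp]: "sets gauss = sets borel"
  unfolding gauss_def by simp

lemma integrable_gauss_pow: "integrable gauss (\<lambda>x. x ^ n)"
  unfolding gauss_def
  by (subst integrable_density) (auto simp: integrable_std_normal_moment)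

lemma integrable_gauss_poly: "integrable gauss (\<lambda>x. poly p x)"
  unfolding poly_altdef
  by (intro Bochner_Integration.integrable_sum integrable_mult_right integrable_gauss_pow)

definition mu :: "nat \<Rightarrow> real" where "mu n = integral\<^sup>L gauss (\<lambda>x. x ^ n)"

lemma mu0: "mu 0 = 1"
  unfolding mu_def using gauss_prob prob_space.prob_space by (simp add: prob_space.prob_space)

lemma integral_gauss_poly:
  assumes "degree p \<le> D"
  shows "integral\<^sup>L gauss (poly p) = (\<Sum>i\<le>D. coeff p i * mu i)"
proof -
  have "poly p = (\<lambda>x. \<Sum>i\<le>D. coeff p i * x ^ i)"
  proof
    fix x
    show "poly p x = (\<Sum>i\<le>D. coeff p i * x ^ i)"
      unfolding poly_altdef using assms
      by (intro sum.mono_neutral_left) (auto simp: coeff_eq_0)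
  qed
  then show ?thesis
    by (simp add: Bochner_Integration.integral_sum integrable_mult_right integrable_gauss_pow mu_def)
qed

lemma gauss_tail:
  assumes r: "r \<ge> 0"
  shows "measure gauss {w. r < \<bar>w\<bar>} \<le> sqrt 2 * exp (- (r^2)/4)"
proof -
  have meas: "{w. r < \<bar>w\<bar>} \<in> sets borel" by measurable
  have "emeasure gauss {w. r < \<bar>w\<bar>} = (\<integral>\<^sup>+ x. ennreal (std_normal_density x) * indicator {w. r < \<bar>w\<bar>} x \<partial>lborel)"
    unfolding gauss_def by (subst emeasure_density) (use meas in auto)
  also have "\<dots> \<le> (\<integral>\<^sup>+ x. ennreal (sqrt 2 * exp (- (r^2)/4)) * ennreal (normal_density 0 (sqrt 2) x) \<partial>lborel)"
  proof (intro nn_integral_mono)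
    fix x :: real
    show "ennreal (std_normal_density x) * indicator {w. r < \<bar>w\<bar>} x
          \<le> ennreal (sqrt 2 * exp (- (r^2)/4)) * ennreal (normal_density 0 (sqrt 2) x)"
    proof (cases "r < \<bar>x\<bar>")
      case True
      have "r^2 \<le> x^2" using True r by (metis abs_ge_zero abs_le_square_iff less_imp_le abs_of_nonneg)
      then have e: "exp (- (x^2)/2) \<le> exp (- (r^2)/4) * exp (- (x^2)/4)"
        by (subst mult_exp_exp) simp
      have "std_normal_density x = 1/sqrt(2*pi) * exp (- (x^2)/2)"
        by (simp add: std_normal_density_def)
      also have "\<dots> \<le> 1/sqrt(2*pi) * (exp (- (r^2)/4) * exp (- (x^2)/4))"
        using e by (intro mult_left_mono) auto
      also have "\<dots> = sqrt 2 * exp (- (r^2)/4) * normal_density 0 (sqrt 2) x"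
        by (simp add: normal_density_def real_sqrt_mult field_simps)
      finally show ?thesis using True
        by (simp add: ennreal_mult[symmetric])
    qed simp
  qed
  also have "\<dots> = ennreal (sqrt 2 * exp (- (r^2)/4)) * (\<integral>\<^sup>+ x. ennreal (normal_density 0 (sqrt 2) x) \<partial>lborel)"
    by (rule nn_integral_cmult) auto
  also have "(\<integral>\<^sup>+ x. ennreal (normal_density 0 (sqrt 2) x) \<partial>lborel) = 1"
    by (subst nn_integral_eq_integral) auto
  finally have "emeasure gauss {w. r < \<bar>w\<bar>} \<le> ennreal (sqrt 2 * exp (- (r^2)/4))" by simp
  then show ?thesis
    using finite_measure.emeasure_eq_measure[OF prob_space.finite_measure[OF gauss_prob]] by (simp add: ennreal_le_iff)
qed

lemma gauss_interval:
  assumes "0 \<le> a" "a \<le> b"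
  shows "measure gauss {a..b} \<ge> (b - a) * (exp (- (b^2)/2) / 3)"
proof -
  have "emeasure gauss {a..b} = (\<integral>\<^sup>+ x. ennreal (std_normal_density x) * indicator {a..b} x \<partial>lborel)"
    unfolding gauss_def by (subst emeasure_density) auto
  also have "\<dots> \<ge> (\<integral>\<^sup>+ x. ennreal (exp (- (b^2)/2) / 3) * indicator {a..b} x \<partial>lborel)"
  proof (intro nn_integral_mono)
    fix x :: real
    show "ennreal (exp (- (b^2)/2) / 3) * indicator {a..b} x \<le> ennreal (std_normal_density x) * indicator {a..b} x"
    proof (cases "x \<in> {a..b}")
      case True
      then have "x^2 \<le> b^2" using assms by (intro power_mono) auto
      then have e: "exp (- (b^2)/2) \<le> exp (- (x^2)/2)" by simp
      have s: "sqrt (2*pi) \<le> 3"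
        using pi_less_4 by (intro real_le_lsqrt) auto
      have "exp (- (b^2)/2) / 3 \<le> exp (- (x^2)/2) / sqrt (2*pi)"
        using e s by (intro frac_le) auto
      then show ?thesis using True by (simp add: std_normal_density_def ennreal_leI)
    qed simp
  qed
  also have "(\<integral>\<^sup>+ x. ennreal (exp (- (b^2)/2) / 3) * indicator {a..b} x \<partial>lborel) = ennreal ((b - a) * (exp (- (b^2)/2) / 3))"
    using assms by (subst nn_integral_cmult_indicator) (auto simp: ennreal_mult'[symmetric] mult.commute)
  finally have "ennreal ((b - a) * (exp (- (b^2)/2) / 3)) \<le> emeasure gauss {a..b}" .
  then show ?thesis
    using finite_measure.emeasure_eq_measure[OF prob_space.finite_measure[OF gauss_prob]] by (simp add: ennreal_le_iff)
qed



lemma node_bound: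
  fixes q :: "real poly"
  assumes "degree q \<le> d" "0 \<le> c" "\<And>j. j \<le> d \<Longrightarrow> \<bar>poly q (c + real j)\<bar> \<le> M"
  shows "(\<Sum>m\<le>d. \<bar>coeff q m\<bar>) \<le> (4 + 2*c + 2*real d)^d * M"
  using assms
proof (induction d arbitrary: q c M)
  case 0
  then have "\<bar>poly q c\<bar> \<le> M" by (metis add_0_right of_nat_0 order_refl)
  moreover have "poly q c = coeff q 0" using 0 by (simp add: poly_altdef)
  ultimately show ?case by simp
next
  case (Suc d)
  define r where "r = synthetic_div q c"
  have degr: "degree r \<le> d" using Suc.prems(1) by (simp add: r_def degree_synthetic_div)
  have M0: "\<bar>poly q c\<bar> \<le> M" using Suc.prems(3)[of 0] by simp
  have id: "q + smult c r = pCons (poly q c) r" unfolding r_def by (rule synthetic_div_correct)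
  have polyid: "(x - c) * poly r x = poly q x - poly q c" for x
    using arg_cong[OF id, of "\<lambda>p. poly p x"] by (simp add: algebra_simps)
  have rb: "\<bar>poly r (c + 1 + real j)\<bar> \<le> 2 * M" if "j \<le> d" for j
  proof -
    have "(1 + real j) * \<bar>poly r (c + 1 + real j)\<bar> = \<bar>poly q (c + real (Suc j)) - poly q c\<bar>"
    proof -
      have "(1 + real j) * poly r (c + 1 + real j) = poly q (c + real (Suc j)) - poly q c"
        using polyid[of "c + 1 + real j"] by (simp add: algebra_simps)
      then have "\<bar>(1 + real j) * poly r (c + 1 + real j)\<bar> = \<bar>poly q (c + real (Suc j)) - poly q c\<bar>" by simp
      then show ?thesis by (simp only: abs_mult)
    qed
    also have "\<dots> \<le> 2 * M" using Suc.prems(3)[of "Suc j"] M0 that by auto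
    finally have "(1 + real j) * \<bar>poly r (c + 1 + real j)\<bar> \<le> 2 * M" .
    moreover have "\<bar>poly r (c + 1 + real j)\<bar> \<le> (1 + real j) * \<bar>poly r (c + 1 + real j)\<bar>"
      by (simp add: mult_le_cancel_right1)
    ultimately show ?thesis by linarith
  qed
  have IH: "(\<Sum>m\<le>d. \<bar>coeff r m\<bar>) \<le> (4 + 2*(c+1) + 2*real d)^d * (2*M)"
    using Suc.IH[OF degr, of "c+1" "2*M"] Suc.prems(2) rb by (simp add: add_ac)
  have cq0: "coeff q 0 = poly q c - c * coeff r 0"
    using arg_cong[OF id, of "\<lambda>p. coeff p 0"] by simp
  have cqS: "coeff q (Suc m) = coeff r m - c * coeff r (Suc m)" for m
    using arg_cong[OF id, of "\<lambda>p. coeff p (Suc m)"] by simp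
  have rd: "coeff r (Suc d) = 0" using degr by (simp add: coeff_eq_0)
  have "(\<Sum>m\<le>Suc d. \<bar>coeff q m\<bar>) = \<bar>coeff q 0\<bar> + (\<Sum>m\<le>d. \<bar>coeff q (Suc m)\<bar>)"
    by (rule sum.atMost_Suc_shift)
  also have "\<dots> \<le> (\<bar>poly q c\<bar> + c * \<bar>coeff r 0\<bar>) + (\<Sum>m\<le>d. \<bar>coeff r m\<bar> + c * \<bar>coeff r (Suc m)\<bar>)"
    unfolding cq0 cqS using Suc.prems(2)
    by (intro add_mono sum_mono) (auto simp: abs_mult intro: order_trans[OF abs_triangle_ineq4])
  also have "\<dots> = \<bar>poly q c\<bar> + (\<Sum>m\<le>d. \<bar>coeff r m\<bar>) + c * (\<bar>coeff r 0\<bar> + (\<Sum>m\<le>d. \<bar>coeff r (Suc m)\<bar>))"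
    by (simp add: sum.distrib sum_distrib_left algebra_simps)
  also have "\<bar>coeff r 0\<bar> + (\<Sum>m\<le>d. \<bar>coeff r (Suc m)\<bar>) = (\<Sum>m\<le>d. \<bar>coeff r m\<bar>)"
    using rd sum.atMost_Suc_shift[of "\<lambda>m. \<bar>coeff r m\<bar>" d] by simp
  finally have "(\<Sum>m\<le>Suc d. \<bar>coeff q m\<bar>) \<le> M + (1 + c) * (\<Sum>m\<le>d. \<bar>coeff r m\<bar>)"
    using M0 by (simp add: algebra_simps)
  also have "\<dots> \<le> M + (1 + c) * ((4 + 2*(c+1) + 2*real d)^d * (2*M))"
    using IH Suc.prems(2) by (intro add_left_mono mult_left_mono) auto
  also have "\<dots> \<le> (4 + 2*c + 2*real (Suc d))^(Suc d) * M"
  proof -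
    let ?X = "(6 + 2*c + 2*real d)"
    have M: "0 \<le> M" using M0 by linarith
    have X1: "1 \<le> ?X^d" using Suc.prems(2) by (intro one_le_power) auto
    have "M + (1 + c) * (?X^d * (2*M)) \<le> ?X^d * M + (2 + 2*c) * ?X^d * M"
      using X1 M by (simp add: algebra_simps mult_right_mono mult_le_cancel_left1)
    also have "\<dots> = (3 + 2*c) * (?X^d * M)" by (simp add: algebra_simps)
    also have "\<dots> \<le> ?X * (?X^d * M)"
      using Suc.prems(2) M X1 by (intro mult_right_mono) auto
    finally show ?thesis by (simp add: algebra_simps)
  qed
  finally show ?case .
qed



definition cc :: "nat \<Rightarrow> real poly \<Rightarrow> nat \<Rightarrow> real" where
  "cc d Q k = (\<Sum>n\<le>d. coeff ((pderiv ^^ k) Q) n * mu n)"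

lemma single_le_sum:
  fixes f :: "nat \<Rightarrow> real"
  assumes "\<And>i. i \<in> A \<Longrightarrow> 0 \<le> f i" "finite A" "i \<in> A"
  shows "f i \<le> sum f A"
  using member_le_sum[of i A f] assms by auto

context
  fixes d :: nat and Q :: "real poly" and G :: real
  assumes degQ: "degree Q \<le> d" and d1: "1 \<le> d" and G1: "1 \<le> G"
    and Gb: "\<And>n k. n \<le> d \<Longrightarrow> k \<le> d \<Longrightarrow> \<bar>pochhammer (real (Suc n)) k * mu n\<bar> \<le> G"
    and mean0: "(\<Sum>n\<le>d. coeff Q n * mu n) = 0"
begin

lemma aQ0: "m > d \<Longrightarrow> coeff Q m = 0"
  using degQ by (simp add: coeff_eq_0)

lemma cc_expand: "cc d Q k = (\<Sum>n\<le>d. pochhammer (real (Suc n)) k * mu n * coeff Q (n + k))"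
  unfolding cc_def coeff_higher_pderiv by (simp add: algebra_simps)

lemma cc_split: "cc d Q k = fact k * coeff Q k + (\<Sum>n\<in>{1..d}. pochhammer (real (Suc n)) k * mu n * coeff Q (n + k))"
proof -
  have "{..d} = insert 0 {1..d}" by auto
  then show ?thesis unfolding cc_expand
    by (simp add: mu0 pochhammer_fact)
qed

abbreviation V :: "real \<Rightarrow> real" where "V s \<equiv> (\<Sum>k\<in>{1..d}. \<bar>cc d Q k\<bar> * s ^ k)"
abbreviation S :: "real \<Rightarrow> real" where "S s \<equiv> (\<Sum>m\<in>{1..d}. \<bar>coeff Q m\<bar> * s ^ m)"

lemma V_nonneg: "0 \<le> s \<Longrightarrow> 0 \<le> V s" by (intro sum_nonneg) auto
lemma S_nonneg: "0 \<le> s \<Longrightarrow> 0 \<le> S s" by (intro sum_nonneg) auto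

lemma term_le_S:
  assumes "1 \<le> m" "0 \<le> s"
  shows "\<bar>coeff Q m\<bar> * s ^ m \<le> S s"
proof (cases "m \<le> d")
  case True
  then show ?thesis using assms by (intro single_le_sum) auto
next
  case False
  then show ?thesis using aQ0 S_nonneg assms by simp
qed

lemma tri_bound:
  assumes s: "1 \<le> s"
  shows "1 \<le> k \<Longrightarrow> \<bar>coeff Q k\<bar> * s ^ k \<le> (1 + G * d) ^ (d - k) * V s"
proof (induction "d - k" arbitrary: k rule: less_induct)
  case less
  have V0: "0 \<le> V s" using s by (intro V_nonneg) auto
  show ?case
  proof (cases "k \<le> d")
    case False
    then show ?thesis using aQ0 V0 by simp
  next
    case kd: True
    let ?T = "\<lambda>n. pochhammer (real (Suc n)) k * mu n * coeff Q (n + k)"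
    have ck: "\<bar>cc d Q k\<bar> * s ^ k \<le> V s"
      using kd less.prems s by (intro single_le_sum) auto
    have fk: "1 \<le> (fact k :: real)" by simp
    have "\<bar>coeff Q k\<bar> * s ^ k \<le> fact k * \<bar>coeff Q k\<bar> * s ^ k"
    proof -
      have "0 \<le> \<bar>coeff Q k\<bar> * s ^ k" using s by simp
      from mult_right_mono[OF fk this] show ?thesis by (simp add: mult.assoc)
    qed
    also have "fact k * \<bar>coeff Q k\<bar> = \<bar>cc d Q k - (\<Sum>n\<in>{1..d}. ?T n)\<bar>"
      unfolding cc_split by (simp add: abs_mult)
    also have "\<dots> * s ^ k \<le> (\<bar>cc d Q k\<bar> + (\<Sum>n\<in>{1..d}. \<bar>?T n\<bar>)) * s ^ k"
      using s by (intro mult_right_mono order_trans[OF abs_triangle_ineq4] add_left_mono sum_abs) auto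
    also have "\<dots> = \<bar>cc d Q k\<bar> * s ^ k + (\<Sum>n\<in>{1..d}. \<bar>?T n\<bar> * s ^ k)"
      by (simp add: distrib_right sum_distrib_right)
    also have "\<dots> \<le> V s + (\<Sum>n\<in>{1..d}. (if k = d then 0 else G * ((1 + G * d) ^ (d - Suc k) * V s)))"
    proof (intro add_mono ck sum_mono)
      fix n assume n: "n \<in> {1..d}"
      show "\<bar>?T n\<bar> * s ^ k \<le> (if k = d then 0 else G * ((1 + G * d) ^ (d - Suc k) * V s))"
      proof (cases "n + k \<le> d")
        case False
        then show ?thesis using aQ0[of "n+k"] V0 G1 by (simp add: mult_nonneg_nonneg)
      next
        case True
        have kd': "k \<noteq> d" using True n by auto
        have IH: "\<bar>coeff Q (n+k)\<bar> * s ^ (n+k) \<le> (1 + G * d) ^ (d - (n+k)) * V s"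
          using less.hyps[of "n+k"] True n less.prems by auto
        have pw: "(1 + G * d) ^ (d - (n+k)) \<le> (1 + G * d) ^ (d - Suc k)"
          using G1 n True by (intro power_increasing) auto
        have sk: "s ^ k \<le> s ^ (n + k)" using s by (intro power_increasing) auto
        have "\<bar>?T n\<bar> * s ^ k = \<bar>pochhammer (real (Suc n)) k * mu n\<bar> * (\<bar>coeff Q (n + k)\<bar> * s ^ k)"
          by (simp add: abs_mult)
        also have "\<dots> \<le> G * (\<bar>coeff Q (n+k)\<bar> * s ^ (n+k))"
          using Gb[of n k] n kd sk s by (intro mult_mono mult_left_mono) auto
        also have "\<dots> \<le> (if k = d then 0 else G * ((1 + G * d) ^ (d - Suc k) * V s))"
          using IH pw V0 G1 kd' by (simp add: mult_left_mono order_trans[OF IH] mult_right_mono)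
        finally show ?thesis .
      qed
    qed
    also have "\<dots> \<le> (1 + G * d) ^ (d - k) * V s"
    proof (cases "k = d")
      case True
      then show ?thesis by simp
    next
      case False
      then have "d - k = Suc (d - Suc k)" using kd by auto
      have Y: "1 \<le> (1 + G * d) ^ (d - Suc k)" using G1 by (intro one_le_power) auto
      have "V s \<le> (1 + G * d) ^ (d - Suc k) * V s"
        using mult_right_mono[OF Y V0] by simp
      then show ?thesis using V0 \<open>k \<noteq> d\<close> \<open>d - k = Suc (d - Suc k)\<close>
        by (simp add: algebra_simps)
    qed
    finally show ?thesis .
  qed
qed

lemma mu_le_G: "n \<le> d \<Longrightarrow> \<bar>mu n\<bar> \<le> G"
  using Gb[of n 0] by simp

lemma a0_bound:
  assumes s: "1 \<le> s"
  shows "\<bar>coeff Q 0\<bar> \<le> G * S s"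
proof -
  have "{..d} = insert 0 {1..d}" by auto
  then have "coeff Q 0 = - (\<Sum>n\<in>{1..d}. coeff Q n * mu n)"
    using mean0 by (simp add: mu0)
  then have "\<bar>coeff Q 0\<bar> \<le> (\<Sum>n\<in>{1..d}. \<bar>coeff Q n * mu n\<bar>)"
    by (simp add: sum_abs)
  also have "\<dots> \<le> (\<Sum>n\<in>{1..d}. G * (\<bar>coeff Q n\<bar> * s ^ n))"
  proof (intro sum_mono)
    fix n assume n: "n \<in> {1..d}"
    have "\<bar>coeff Q n * mu n\<bar> = \<bar>coeff Q n\<bar> * \<bar>mu n\<bar>" by (simp add: abs_mult)
    also have "\<dots> \<le> \<bar>coeff Q n\<bar> * (s ^ n * G)"
      using mu_le_G[of n] n s G1
      by (intro mult_left_mono) (auto intro!: order_trans[OF _ mult_right_mono[of 1 "s^n" G]] one_le_power)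
    finally show "\<bar>coeff Q n * mu n\<bar> \<le> G * (\<bar>coeff Q n\<bar> * s ^ n)" by (simp add: algebra_simps)
  qed
  also have "\<dots> = G * S s" by (simp add: sum_distrib_left)
  finally show ?thesis .
qed

lemma S_le_V:
  assumes s: "1 \<le> s"
  shows "S s \<le> d * (1 + G * d) ^ d * V s"
proof -
  have V0: "0 \<le> V s" using s by (intro V_nonneg) auto
  have "S s \<le> (\<Sum>m\<in>{1..d}. (1 + G * d) ^ d * V s)"
  proof (intro sum_mono)
    fix m assume m: "m \<in> {1..d}"
    have "(1 + G * d) ^ (d - m) \<le> (1 + G * d) ^ d" using G1 by (intro power_increasing) auto
    then show "\<bar>coeff Q m\<bar> * s ^ m \<le> (1 + G * d) ^ d * V s"
      using tri_bound[OF s, of m] m V0 by (meson atLeastAtMost_iff mult_right_mono order_trans)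
  qed
  then show ?thesis by simp
qed

lemma upper_poly:
  assumes s: "1 \<le> s" and w: "\<bar>w\<bar> \<le> s"
  shows "\<bar>poly Q w\<bar> \<le> (G + 1) * d * (1 + G * d) ^ d * V s"
proof -
  have "\<bar>poly Q w\<bar> = \<bar>\<Sum>m\<le>d. coeff Q m * w ^ m\<bar>"
    unfolding poly_altdef using degQ
    by (subst sum.mono_neutral_left[of "{..d}"]) (auto simp: coeff_eq_0)
  also have "\<dots> \<le> (\<Sum>m\<le>d. \<bar>coeff Q m\<bar> * s ^ m)"
    by (rule order_trans[OF sum_abs sum_mono])
       (auto simp: abs_mult power_abs intro!: mult_left_mono power_mono w)
  also have "{..d} = insert 0 {1..d}" by auto
  then have "(\<Sum>m\<le>d. \<bar>coeff Q m\<bar> * s ^ m) = \<bar>coeff Q 0\<bar> + S s" by simp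
  also have "\<bar>coeff Q 0\<bar> + S s \<le> (G + 1) * S s"
    using a0_bound[OF s] by (simp add: algebra_simps)
  also have "\<dots> \<le> (G + 1) * (d * (1 + G * d) ^ d * V s)"
    using S_le_V[OF s] G1 by (intro mult_left_mono) auto
  finally show ?thesis by (simp add: algebra_simps)
qed

lemma V_le_S:
  assumes s: "1 \<le> s"
  shows "V s \<le> G * d * (d + 1) * S s"
proof -
  have S0: "0 \<le> S s" using s by (intro S_nonneg) auto
  have "V s \<le> (\<Sum>k\<in>{1..d}. (d + 1) * (G * S s))"
  proof (intro sum_mono)
    fix k assume k: "k \<in> {1..d}"
    have "\<bar>cc d Q k\<bar> * s ^ k \<le> (\<Sum>n\<le>d. \<bar>pochhammer (real (Suc n)) k * mu n * coeff Q (n + k)\<bar>) * s ^ k"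
      unfolding cc_expand using s by (intro mult_right_mono sum_abs) auto
    also have "\<dots> = (\<Sum>n\<le>d. \<bar>pochhammer (real (Suc n)) k * mu n\<bar> * (\<bar>coeff Q (n + k)\<bar> * s ^ k))"
      by (simp add: sum_distrib_right abs_mult mult.assoc)
    also have "\<dots> \<le> (\<Sum>n\<le>d. G * S s)"
    proof (intro sum_mono)
      fix n assume n: "n \<in> {..d}"
      have "\<bar>coeff Q (n + k)\<bar> * s ^ k \<le> \<bar>coeff Q (n + k)\<bar> * s ^ (n + k)"
        using s by (intro mult_left_mono power_increasing) auto
      also have "\<dots> \<le> S s" using k s by (intro term_le_S) auto
      finally show "\<bar>pochhammer (real (Suc n)) k * mu n\<bar> * (\<bar>coeff Q (n + k)\<bar> * s ^ k) \<le> G * S s"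
        using Gb[of n k] n k s by (intro mult_mono) auto
    qed
    also have "\<dots> = (d + 1) * (G * S s)" by simp
    finally show "\<bar>cc d Q k\<bar> * s ^ k \<le> (d + 1) * (G * S s)" .
  qed
  then show ?thesis by (simp add: algebra_simps)
qed

lemma deriv_bound:
  assumes s: "1 \<le> s" and L: "1 \<le> (L::real)" and x: "\<bar>x\<bar> \<le> L * s"
  shows "\<bar>poly (pderiv Q) x\<bar> \<le> (real d + 1) * (real d * L ^ d * S s)"
proof -
  have S0: "0 \<le> S s" using s by (intro S_nonneg) auto
  have dp: "degree (pderiv Q) \<le> d" using degQ degree_pderiv[of Q] by linarith
  have "\<bar>poly (pderiv Q) x\<bar> = \<bar>\<Sum>i\<le>d. coeff (pderiv Q) i * x ^ i\<bar>"
    unfolding poly_altdef using dp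
    by (subst sum.mono_neutral_left[of "{..d}"]) (auto simp: coeff_eq_0)
  also have "\<dots> \<le> (\<Sum>i\<le>d. \<bar>coeff (pderiv Q) i\<bar> * (L * s) ^ i)"
    by (rule order_trans[OF sum_abs sum_mono])
       (auto simp: abs_mult power_abs intro!: mult_left_mono power_mono x)
  also have "\<dots> \<le> (\<Sum>i\<le>d. real d * L ^ d * S s)"
  proof (intro sum_mono)
    fix i assume i: "i \<in> {..d}"
    show "\<bar>coeff (pderiv Q) i\<bar> * (L * s) ^ i \<le> real d * L ^ d * S s"
    proof (cases "Suc i \<le> d")
      case False
      then show ?thesis using aQ0[of "Suc i"] S0 L by (simp add: coeff_pderiv)
    next
      case True
      have "\<bar>coeff (pderiv Q) i\<bar> * (L * s) ^ i = real (Suc i) * (L ^ i * (\<bar>coeff Q (Suc i)\<bar> * s ^ i))"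
        by (simp add: coeff_pderiv abs_mult power_mult_distrib)
      also have "\<dots> \<le> real d * (L ^ d * (\<bar>coeff Q (Suc i)\<bar> * s ^ Suc i))"
        using True L s
        by (intro mult_mono mult_left_mono power_increasing) auto
      also have "\<dots> \<le> real d * (L ^ d * S s)"
        using L s by (intro mult_left_mono term_le_S) auto
      finally show ?thesis by simp
    qed
  qed
  also have "\<dots> = (real d + 1) * (real d * L ^ d * S s)" by simp
  finally show ?thesis .
qed

lemma Qmeas: "{w. t \<le> \<bar>poly Q w\<bar>} \<in> sets gauss"
proof -
  have [measurable]: "(\<lambda>w. poly Q w) \<in> borel_measurable borel"
    by (intro borel_measurable_continuous_onI continuous_intros)
  show ?thesis by simp
qed

lemma prob_upper:
  assumes s: "1 \<le> s" and lt: "(G + 1) * d * (1 + G * d) ^ d * V s < t"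
  shows "measure gauss {w. t \<le> \<bar>poly Q w\<bar>} \<le> sqrt 2 * exp (- (s^2)/4)"
proof -
  interpret prob_space gauss by (rule gauss_prob)
  have "{w. t \<le> \<bar>poly Q w\<bar>} \<subseteq> {w. s < \<bar>w\<bar>}"
  proof
    fix w assume "w \<in> {w. t \<le> \<bar>poly Q w\<bar>}"
    then have "t \<le> \<bar>poly Q w\<bar>" by simp
    then show "w \<in> {w. s < \<bar>w\<bar>}"
      using upper_poly[OF s, of w] lt by (cases "\<bar>w\<bar> \<le> s") auto
  qed
  then have "measure gauss {w. t \<le> \<bar>poly Q w\<bar>} \<le> measure gauss {w. s < \<bar>w\<bar>}"
    by (intro finite_measure_mono) auto
  also have "\<dots> \<le> sqrt 2 * exp (- (s^2)/4)" using s by (intro gauss_tail) auto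
  finally show ?thesis .
qed

definition "B1 = G * d * (d + 1)"
definition "KC = (4 + 2 * real d) ^ d"
definition "lam = 4 * B1 * KC"
definition "Lam = d * lam + 1"
definition "D1 = (real d + 1) * (real d * Lam ^ d)"
definition "del = min 1 (B1 / D1)"

lemma consts_pos: "1 \<le> B1" "1 \<le> KC" "1 \<le> lam" "1 \<le> Lam" "0 < D1" "0 < del" "del \<le> 1"
proof -
  have dd: "1 \<le> real d * (real d + 1)" using d1
    by (metis add_increasing2 le_add_same_cancel2 mult_1 mult_mono of_nat_0_le_iff of_nat_1 of_nat_le_iff zero_le_one)
  show B: "1 \<le> B1" unfolding B1_def using mult_mono[OF G1 dd] G1 by (auto simp: mult.assoc add.commute)
  show K: "1 \<le> KC" unfolding KC_def by (intro one_le_power) auto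
  have "1 \<le> B1 * KC" using mult_mono[OF B K] B by simp
  then show l: "1 \<le> lam" unfolding lam_def by (simp add: mult.assoc)
  show L: "1 \<le> Lam" unfolding Lam_def using l by simp
  show D: "0 < D1" unfolding D1_def using L d1 by simp
  show "0 < del" unfolding del_def using D B by simp
  show "del \<le> 1" unfolding del_def by simp
qed

lemma prob_lower:
  assumes s: "1 \<le> s" and t: "0 < t" "t \<le> V s"
  shows "measure gauss {w. t \<le> \<bar>poly Q w\<bar>} \<ge> del * (exp (- ((Lam * s)^2)/2) / 3)"
proof -
  interpret prob_space gauss by (rule gauss_prob)
  note cp = consts_pos
  have "0 < B1 * S s" using V_le_S[OF s] t unfolding B1_def by linarith
  then have S0: "0 < S s" using cp(1) by (simp add: zero_less_mult_iff)
  define \<rho> where "\<rho> = lam * s"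
  have rho1: "1 \<le> \<rho>" unfolding \<rho>_def using cp(3) s by (metis mult_mono one_le_mult_iff zero_le_one order_trans mult_1)
  define q where "q = pcompose Q [:0, \<rho>:]"
  have degq: "degree q \<le> d" unfolding q_def using degree_pcompose_le[of Q "[:0, \<rho>:]"] degQ
    by (cases "\<rho> = 0") auto
  have "\<exists>j\<le>d. 2 * B1 * S s \<le> \<bar>poly Q (\<rho> * real j)\<bar>"
  proof (rule ccontr)
    assume nt: "\<not> ?thesis"
    have allj: "\<bar>poly q (0 + real j)\<bar> \<le> 2 * B1 * S s" if jd: "j \<le> d" for j
    proof -
      have "\<bar>poly Q (\<rho> * real j)\<bar> < 2 * B1 * S s" using nt jd by (metis not_le)
      then show ?thesis unfolding q_def by (simp add: poly_pcompose mult.commute)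
    qed
    have nb: "(\<Sum>m\<le>d. \<bar>coeff q m\<bar>) \<le> KC * (2 * B1 * S s)"
      using node_bound[OF degq _ allj] unfolding KC_def by simp
    have "lam * S s \<le> (\<Sum>m\<in>{1..d}. \<bar>coeff Q m\<bar> * \<rho> ^ m)"
      unfolding sum_distrib_left
    proof (intro sum_mono)
      fix m assume m: "m \<in> {1..d}"
      have "lam \<le> lam ^ m" using cp(3) m by (metis atLeastAtMost_iff power_increasing power_one_right)
      then have "lam * (\<bar>coeff Q m\<bar> * s ^ m) \<le> lam ^ m * (\<bar>coeff Q m\<bar> * s ^ m)"
        using s by (intro mult_right_mono) auto
      then show "lam * (\<bar>coeff Q m\<bar> * s ^ m) \<le> \<bar>coeff Q m\<bar> * \<rho> ^ m"
        by (simp add: \<rho>_def power_mult_distrib algebra_simps)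
    qed
    also have "\<dots> \<le> (\<Sum>m\<le>d. \<bar>coeff Q m\<bar> * \<rho> ^ m)"
      using rho1 by (intro sum_mono2) auto
    also have "\<dots> = (\<Sum>m\<le>d. \<bar>coeff q m\<bar>)"
      unfolding q_def coeff_pcompose_linear using rho1 by (simp add: abs_mult mult.commute)
    also have "\<dots> \<le> KC * (2 * B1 * S s)" by (rule nb)
    finally have "lam * S s \<le> KC * (2 * B1 * S s)" .
    moreover have "lam * S s = 4 * (B1 * KC * S s)" "KC * (2 * B1 * S s) = 2 * (B1 * KC * S s)"
      by (simp_all add: lam_def algebra_simps)
    moreover have "0 < B1 * KC * S s" using S0 cp(1,2) by simp
    ultimately show False by linarith
  qed
  then obtain j where j: "j \<le> d" "2 * B1 * S s \<le> \<bar>poly Q (\<rho> * real j)\<bar>" by blast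
  define w0 where "w0 = \<rho> * real j"
  have w00: "0 \<le> w0" unfolding w0_def using rho1 by simp
  have w0b: "w0 + 1 \<le> Lam * s"
  proof -
    have "w0 \<le> \<rho> * d" unfolding w0_def using j rho1 by (intro mult_left_mono) auto
    then have "w0 + 1 \<le> d * lam * s + s" using s unfolding \<rho>_def by (simp add: algebra_simps)
    then show ?thesis unfolding Lam_def by (simp add: algebra_simps)
  qed
  have sub: "{w0..w0 + del} \<subseteq> {w. t \<le> \<bar>poly Q w\<bar>}"
  proof
    fix w assume w: "w \<in> {w0..w0 + del}"
    have "\<bar>poly Q w - poly Q w0\<bar> \<le> del * (D1 * S s)"
    proof (cases "w = w0")
      case True then show ?thesis using cp S0 by simp
    next
      case False
      then have lt: "w0 < w" using w by auto
      obtain x where x: "w0 < x" "x < w" "poly Q w - poly Q w0 = (w - w0) * poly (pderiv Q) x"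
        using poly_MVT[OF lt, of Q] by blast
      have "0 \<le> x" "x \<le> Lam * s" using x w w00 w0b cp(7) by auto
      then have xb: "\<bar>x\<bar> \<le> Lam * s" by simp
      have db: "\<bar>poly (pderiv Q) x\<bar> \<le> D1 * S s"
        using deriv_bound[OF s cp(4) xb] unfolding D1_def by (simp add: mult.assoc)
      have "\<bar>poly Q w - poly Q w0\<bar> = (w - w0) * \<bar>poly (pderiv Q) x\<bar>"
        using x lt by (simp add: abs_mult)
      also have "\<dots> \<le> del * (D1 * S s)"
        using w db lt by (intro mult_mono) auto
      finally show ?thesis .
    qed
    also have "del * (D1 * S s) \<le> B1 * S s"
    proof -
      have "del \<le> B1 / D1" unfolding del_def by simp
      then have "del * D1 \<le> B1" using cp by (simp add: field_simps)
      then show ?thesis using S0 by (metis mult.assoc mult_right_mono less_imp_le)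
    qed
    finally have "\<bar>poly Q w - poly Q w0\<bar> \<le> B1 * S s" .
    moreover have "2 * B1 * S s \<le> \<bar>poly Q w0\<bar>" using j unfolding w0_def by simp
    moreover have "V s \<le> B1 * S s" using V_le_S[OF s] unfolding B1_def by simp
    moreover have "\<bar>poly Q w0\<bar> \<le> \<bar>poly Q w\<bar> + \<bar>poly Q w - poly Q w0\<bar>"
      using abs_triangle_ineq4[of "poly Q w" "poly Q w - poly Q w0"] by simp
    ultimately have "t \<le> \<bar>poly Q w\<bar>" using t by linarith
    then show "w \<in> {w. t \<le> \<bar>poly Q w\<bar>}" by simp
  qed
  have "del * (exp (- ((Lam * s)^2)/2) / 3) \<le> del * (exp (- ((w0 + del)^2)/2) / 3)"
  proof -
    have "(w0 + del)^2 \<le> (Lam * s)^2"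
      using w00 w0b cp by (intro power_mono) auto
    then show ?thesis using cp by (intro mult_left_mono) auto
  qed
  also have "\<dots> = ((w0 + del) - w0) * (exp (- ((w0 + del)^2)/2) / 3)" by simp
  also have "\<dots> \<le> measure gauss {w0..w0 + del}"
    using w00 cp by (intro gauss_interval) auto
  also have "\<dots> \<le> measure gauss {w. t \<le> \<bar>poly Q w\<bar>}"
    using sub Qmeas by (intro finite_measure_mono) auto
  finally show ?thesis .
qed

end


definition PP :: "nat \<Rightarrow> (nat \<Rightarrow> real) \<Rightarrow> real poly" where
  "PP T a = (\<Sum>t=0..T. monom (a (T - t)) t) ^ 2"

lemma fsq_poly: "fsq T a = poly (PP T a)"
  by (auto simp: fsq_def fpol_def PP_def poly_sum poly_monom)

lemma degree_PP: "degree (PP T a) \<le> 2 * T"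
proof -
  have "degree (\<Sum>t=0..T. monom (a (T - t)) t) \<le> T"
    by (intro degree_sum_le) (auto intro: order_trans[OF degree_monom_le])
  then show ?thesis unfolding PP_def
    by (metis degree_power_le mult.commute mult_le_mono2 order_trans)
qed

lemma deriv_poly_funpow: "(deriv ^^ k) (poly (p::real poly)) = poly ((pderiv ^^ k) p)"
proof (induction k)
  case (Suc k)
  have D: "deriv (poly q) = poly (pderiv q)" for q :: "real poly"
    by (rule ext) (rule DERIV_imp_deriv[OF poly_DERIV])
  have "(deriv ^^ Suc k) (poly p) = deriv ((deriv ^^ k) (poly p))" by simp
  also have "\<dots> = poly ((pderiv ^^ Suc k) p)" unfolding Suc.IH D by simp
  finally show ?case .
qed simp

lemma higher_pderiv_const: "1 \<le> k \<Longrightarrow> (pderiv ^^ k) [:c:] = 0"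
proof (induction k)
  case (Suc k)
  then show ?case by (cases k) (auto simp: funpow_Suc_right pderiv_pCons)
qed simp

lemma powr_helper:
  assumes x: "0 < x" and e: "0 \<le> e" and p: "1 \<le> p"
  shows "e \<le> x powr (2 / real p) \<Longrightarrow> sqrt e ^ p \<le> x"
    and "e = x powr (2 / real p) \<Longrightarrow> sqrt e ^ p = x"
proof -
  have se: "sqrt e ^ p = e powr (real p / 2)"
  proof (cases "e = 0")
    case True then show ?thesis using p by simp
  next
    case False
    then have "sqrt e = e powr (1/2)" using e by (simp add: powr_half_sqrt)
    then have "sqrt e ^ p = (e powr (1/2)) powr real p"
      using e False by (simp add: powr_realpow)
    also have "\<dots> = e powr (real p / 2)" by (simp add: powr_powr)
    finally show ?thesis .
  qed
  have xx: "(x powr (2 / real p)) powr (real p / 2) = x"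
    using p x by (simp add: powr_powr)
  show "e \<le> x powr (2 / real p) \<Longrightarrow> sqrt e ^ p \<le> x"
  proof -
    assume "e \<le> x powr (2 / real p)"
    then have "e powr (real p / 2) \<le> (x powr (2 / real p)) powr (real p / 2)"
      using e by (intro powr_mono2) auto
    then show ?thesis using se xx by simp
  qed
  show "e = x powr (2 / real p) \<Longrightarrow> sqrt e ^ p = x"
    using se xx by simp
qed



lemma Min_F_cases:
  fixes F :: "nat \<times> nat \<Rightarrow> ereal"
  assumes "finite I" "I \<noteq> {}"
  shows "Min (F ` I) \<in> F ` I" "\<And>x. x \<in> I \<Longrightarrow> Min (F ` I) \<le> F x"
  using assms by (auto intro: Min_in Min_le)

theorem mainTheorem17:
  fixes T :: nat
  assumes "T \<ge> 1"
  shows "\<exists>C>0. \<forall>(a :: nat \<Rightarrow> real) (t :: real). t > 0 \<longrightarrow>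
     (let P = measure gauss {w. \<bar>fsq T a w - integral\<^sup>L gauss (fsq T a)\<bar> \<ge> t}
      in (1 / C) * exp_neg C (eta T a t) \<le> P \<and> P \<le> C * exp_neg (1 / C) (eta T a t))"
proof -
  interpret prob_space gauss by (rule gauss_prob)
  define d where "d = 2 * T"
  have d1: "1 \<le> d" using assms by (simp add: d_def)
  define G where "G = 1 + (\<Sum>n\<le>d. \<Sum>k\<le>d. \<bar>pochhammer (real (Suc n)) k * mu n\<bar>)"
  have G1: "1 \<le> G" unfolding G_def by (simp add: sum_nonneg)
  have Gb: "\<bar>pochhammer (real (Suc n)) k * mu n\<bar> \<le> G" if "n \<le> d" "k \<le> d" for n k
  proof -
    have "\<bar>pochhammer (real (Suc n)) k * mu n\<bar> \<le> (\<Sum>k\<le>d. \<bar>pochhammer (real (Suc n)) k * mu n\<bar>)"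
      using that by (intro single_le_sum) auto
    also have "\<dots> \<le> (\<Sum>n\<le>d. \<Sum>k\<le>d. \<bar>pochhammer (real (Suc n)) k * mu n\<bar>)"
      using that by (intro single_le_sum[where f = "\<lambda>n. \<Sum>k\<le>d. \<bar>pochhammer (real (Suc n)) k * mu n\<bar>"]) (auto intro: sum_nonneg)
    finally show ?thesis unfolding G_def by simp
  qed
  have b0: "degree (0::real poly) \<le> d" by simp
  have m0: "(\<Sum>n\<le>d. coeff (0::real poly) n * mu n) = 0" by simp
  note cp = consts_pos[OF b0 d1 G1 Gb m0]
  define K1 where "K1 = (G + 1) * d * (1 + G * d) ^ d"
  have K10: "0 \<le> K1" unfolding K1_def using G1 by simp
  define L where "L = 2 * K1 * d + 1"
  have L1: "1 \<le> L" unfolding L_def using K10 by simp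
  have KL: "K1 * d < L" unfolding L_def using mult_nonneg_nonneg[OF K10, of "real d"] by linarith
  define A where "A = (Lam d G)^2 / 2"
  have A0: "0 \<le> A" unfolding A_def by simp
  define C where "C = 3 + 4 * L^2 + A + 3 * exp A / del d G"
  have CA: "A \<le> C" "3 \<le> C" "4 * L^2 \<le> C" "3 * exp A / del d G \<le> C"
    unfolding C_def using A0 cp(6) L1 by (auto intro!: divide_nonneg_pos)
  have C0: "0 < C" using CA by simp
  show ?thesis
  proof (intro exI[of _ C] conjI allI impI C0)
    fix a :: "nat \<Rightarrow> real" and t :: real
    assume t: "0 < t"
    define P where "P = PP T a"
    define EP where "EP = integral\<^sup>L gauss (fsq T a)"
    define Q where "Q = P - [:EP:]"
    have degP: "degree P \<le> d" unfolding P_def d_def by (rule degree_PP)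
    have degQ: "degree Q \<le> d" unfolding Q_def using degP by (intro degree_diff_le) auto
    have polyQ: "poly Q w = fsq T a w - EP" for w
      by (simp add: Q_def P_def fsq_poly)
    have mean0: "(\<Sum>n\<le>d. coeff Q n * mu n) = 0"
    proof -
      have "(\<Sum>n\<le>d. coeff Q n * mu n) = integral\<^sup>L gauss (poly Q)"
        using integral_gauss_poly[OF degQ] by simp
      also have "\<dots> = integral\<^sup>L gauss (\<lambda>w. fsq T a w - EP)" using polyQ by presburger
      also have "\<dots> = integral\<^sup>L gauss (fsq T a) - integral\<^sup>L gauss (\<lambda>w. EP)"
        unfolding fsq_poly by (rule Bochner_Integration.integral_diff) (auto simp: integrable_gauss_poly)
      also have "\<dots> = 0" unfolding EP_def using prob_space by simp
      finally show ?thesis .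
    qed
    have EderQ: "Ederiv T a k = cc d Q k" if k: "1 \<le> k" for k
    proof -
      have "P = Q + [:EP:]" unfolding Q_def by simp
      then have "(pderiv ^^ k) P = (pderiv ^^ k) Q"
        using higher_pderiv_const[OF k] by (simp add: higher_pderiv_add)
      moreover have "degree ((pderiv ^^ k) Q) \<le> d" using degQ by (simp add: degree_higher_pderiv)
      ultimately show ?thesis
        unfolding Ederiv_def fsq_poly deriv_poly_funpow cc_def P_def[symmetric]
        using integral_gauss_poly by presburger
    qed
    note up = upper_poly[OF degQ d1 G1 Gb mean0]
    note pu = prob_upper[OF degQ d1 G1 Gb mean0]
    note pl = prob_lower[OF degQ d1 G1 Gb mean0]
    define Pr where "Pr = measure gauss {w. t \<le> \<bar>poly Q w\<bar>}"
    have Pr01: "0 \<le> Pr" "Pr \<le> 1" unfolding Pr_def by auto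
    have seteq: "{w. \<bar>fsq T a w - integral\<^sup>L gauss (fsq T a)\<bar> \<ge> t} = {w. t \<le> \<bar>poly Q w\<bar>}"
      using polyQ unfolding EP_def by auto
    define I where "I = {(p,k). 1 \<le> p \<and> p \<le> k \<and> k \<le> 2*T}"
    define F where "F = (\<lambda>(p,k). if Ederiv T a k = 0 then \<infinity>
                     else ereal ((t / \<bar>Ederiv T a k\<bar>) powr (2 / real p)))"
    have eta_eq: "eta T a t = Min (F ` I)" unfolding eta_def F_def I_def by simp
    have finI: "finite I"
      by (rule finite_subset[of _ "{..2*T} \<times> {..2*T}"]) (auto simp: I_def)
    have neI: "(1,1) \<in> I" unfolding I_def using assms by simp
    have goal: "(1 / C) * exp_neg C (eta T a t) \<le> Pr \<and> Pr \<le> C * exp_neg (1 / C) (eta T a t)"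
    proof (cases "\<forall>k\<in>{1..d}. cc d Q k = 0")
      case True
      have "F ` I = {\<infinity>}"
      proof -
        have "F x = \<infinity>" if "x \<in> I" for x
          using that True EderQ unfolding F_def I_def d_def by auto
        then show ?thesis using neI by force
      qed
      then have etainf: "eta T a t = \<infinity>" using eta_eq by simp
      have "{w. t \<le> \<bar>poly Q w\<bar>} = {}"
      proof -
        have "\<bar>poly Q w\<bar> < t" for w
        proof -
          have "\<bar>poly Q w\<bar> \<le> (G + 1) * d * (1 + G * d) ^ d * (\<Sum>k\<in>{1..d}. \<bar>cc d Q k\<bar> * (max 1 \<bar>w\<bar>) ^ k)"
            by (rule up) auto
          also have "\<dots> = 0" using True by simp
          finally show ?thesis using t by simp
        qed
        then show ?thesis by (auto simp: not_le[symmetric])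
      qed
      then have "Pr = 0" unfolding Pr_def by simp
      then show ?thesis using etainf by (simp add: exp_neg_def)
    next
      case False
      then obtain k1 where k1: "k1 \<in> {1..d}" "cc d Q k1 \<noteq> 0" by blast
      have k1I: "(1, k1) \<in> I" using k1 unfolding I_def d_def by auto
      have Fk1: "F (1, k1) \<noteq> \<infinity>" using k1 EderQ[of k1] unfolding F_def by auto
      obtain p0 k0 where pk0: "(p0, k0) \<in> I" "Min (F ` I) = F (p0, k0)"
      proof -
        have "I \<noteq> {}" using neI by auto
        then have "Min (F ` I) \<in> F ` I" using Min_F_cases(1)[OF finI, of F] by simp
        then show ?thesis using that by auto
      qed
      have "F (p0, k0) \<le> F (1, k1)" using Min_F_cases(2)[OF finI _ k1I, of F] neI pk0 by auto
      then have Fne: "F (p0, k0) \<noteq> \<infinity>" using Fk1 by auto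
      have p0: "1 \<le> p0" "p0 \<le> k0" "k0 \<le> d" using pk0 unfolding I_def d_def by auto
      have c0: "cc d Q k0 \<noteq> 0" using Fne EderQ[of k0] p0 unfolding F_def by auto
      define e where "e = (t / \<bar>cc d Q k0\<bar>) powr (2 / real p0)"
      have eta_e: "eta T a t = ereal e"
        using eta_eq pk0 c0 EderQ[of k0] p0 unfolding F_def e_def by auto
      have e0: "0 \<le> e" unfolding e_def by simp
      define s where "s = sqrt e"
      have s0: "0 \<le> s" unfolding s_def using e0 by simp
      have s2: "s^2 = e" unfolding s_def using e0 by simp
      have allk: "\<bar>cc d Q k\<bar> * s ^ p \<le> t" if "1 \<le> p" "p \<le> k" "k \<le> d" for p k
      proof (cases "cc d Q k = 0")
        case True then show ?thesis using t by simp
      next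
        case False
        have "(p, k) \<in> I" using that unfolding I_def d_def by auto
        then have "Min (F ` I) \<le> F (p, k)" using Min_F_cases(2)[OF finI, of "(p,k)" F] neI by auto
        then have "e \<le> (t / \<bar>cc d Q k\<bar>) powr (2 / real p)"
          using eta_e eta_eq False EderQ[of k] that unfolding F_def by auto
        from powr_helper(1)[OF _ e0 that(1) this] have "s ^ p \<le> t / \<bar>cc d Q k\<bar>"
          using t False unfolding s_def by simp
        then show ?thesis using False by (simp add: field_simps)
      qed
      have eqk0: "\<bar>cc d Q k0\<bar> * s ^ p0 = t"
      proof -
        have "s ^ p0 = t / \<bar>cc d Q k0\<bar>"
          using powr_helper(2)[OF _ e0 p0(1) e_def] t c0 unfolding s_def by simp
        then show ?thesis using c0 by simp
      qed
      show ?thesis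
      proof
        define s1 where "s1 = max s 1"
        have s11: "1 \<le> s1" unfolding s1_def by simp
        have tV: "t \<le> (\<Sum>k\<in>{1..d}. \<bar>cc d Q k\<bar> * s1 ^ k)"
        proof -
          have "s ^ p0 \<le> s1 ^ p0" unfolding s1_def using s0 by (intro power_mono) auto
          also have "\<dots> \<le> s1 ^ k0" using s11 p0 by (intro power_increasing) auto
          finally have "t \<le> \<bar>cc d Q k0\<bar> * s1 ^ k0" using eqk0
            by (metis abs_ge_zero mult_left_mono)
          also have "\<dots> \<le> (\<Sum>k\<in>{1..d}. \<bar>cc d Q k\<bar> * s1 ^ k)"
            using p0 s11 by (intro single_le_sum) auto
          finally show ?thesis .
        qed
        have low: "del d G * (exp (- ((Lam d G * s1)^2)/2) / 3) \<le> Pr"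
          unfolding Pr_def by (rule pl) (use s11 t tV in auto)
        have s1sq: "s1^2 \<le> 1 + e"
        proof (cases "s \<le> 1")
          case True then show ?thesis unfolding s1_def using e0 by simp
        next
          case False then show ?thesis unfolding s1_def using s2 by simp
        qed
        have "(Lam d G * s1)^2 / 2 = A * s1^2" unfolding A_def by (simp add: power_mult_distrib)
        also have "\<dots> \<le> A * (1 + e)" using A0 s1sq by (intro mult_left_mono) auto
        finally have "exp (- (A + A * e)) \<le> exp (- ((Lam d G * s1)^2)/2)" by (simp add: algebra_simps)
        then have "del d G * (exp (- (A + A * e)) / 3) \<le> del d G * (exp (- ((Lam d G * s1)^2)/2) / 3)"
          using cp(6) by (intro mult_left_mono divide_right_mono) auto
        then have "del d G * (exp (- (A + A * e)) / 3) \<le> Pr"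
          using low by linarith
        moreover have "(1 / C) * exp (- C * e) \<le> del d G * (exp (- (A + A * e)) / 3)"
        proof -
          have "1 / C \<le> del d G * exp (- A) / 3"
          proof -
            have "3 * exp A / del d G \<le> C" by (rule CA(4))
            then have "3 * exp A \<le> C * del d G" using cp(6) by (simp add: field_simps)
            then have "3 * exp A * exp (- A) \<le> C * del d G * exp (- A)"
              by (intro mult_right_mono) auto
            moreover have "exp A * exp (- A) = 1" by (simp add: exp_minus_inverse)
            ultimately have "3 \<le> C * del d G * exp (- A)" by (simp add: mult.assoc)
            then show ?thesis using C0 by (simp add: field_simps)
          qed
          moreover have "exp (- C * e) \<le> exp (- (A * e))"
            using CA(1) e0 by (simp add: mult_right_mono)
          ultimately have "(1 / C) * exp (- C * e) \<le> (del d G * exp (- A) / 3) * exp (- (A * e))"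
            using C0 cp(6) by (intro mult_mono) (auto intro: less_imp_le)
          also have "\<dots> = del d G * (exp (- (A + A * e)) / 3)"
            by (simp add: exp_add[symmetric] algebra_simps exp_diff)
          finally show ?thesis .
        qed
        ultimately have "(1 / C) * exp (- C * e) \<le> Pr" by linarith
        then show "(1 / C) * exp_neg C (eta T a t) \<le> Pr"
          using eta_e by (simp add: exp_neg_def)
      next
        have "Pr \<le> C * exp (- (1 / C) * e)"
        proof (cases "e < L^2")
          case True
          have "(1 / C) * e \<le> 1 / 4"
          proof -
            have "e \<le> L^2" using True by simp
            then have "4 * e \<le> C" using CA(3) by linarith
            then show ?thesis using C0 by (simp add: field_simps)
          qed
          then have "3 / 4 \<le> exp (- (1 / C) * e)"
            using exp_ge_add_one_self[of "- (1 / C) * e"] by simp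
          then have "C * (3 / 4) \<le> C * exp (- (1 / C) * e)" using C0 by simp
          then show ?thesis using Pr01 CA(2) by linarith
        next
          case False
          then have "L^2 \<le> s^2" using s2 by simp
          then have sL: "L \<le> s" using power2_le_imp_le[of L s] s0 by simp
          define s' where "s' = s / L"
          have s'1: "1 \<le> s'" unfolding s'_def using sL L1 by simp
          have Vs: "(\<Sum>k\<in>{1..d}. \<bar>cc d Q k\<bar> * s ^ k) \<le> d * t"
          proof -
            have "(\<Sum>k\<in>{1..d}. \<bar>cc d Q k\<bar> * s ^ k) \<le> (\<Sum>k\<in>{1..d}. t)"
              by (intro sum_mono allk) auto
            then show ?thesis by simp
          qed
          have Vs': "(\<Sum>k\<in>{1..d}. \<bar>cc d Q k\<bar> * s' ^ k) \<le> (\<Sum>k\<in>{1..d}. \<bar>cc d Q k\<bar> * s ^ k) / L"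
            unfolding sum_divide_distrib
          proof (intro sum_mono)
            fix k assume k: "k \<in> {1..d}"
            have "L \<le> L ^ k" using L1 k by (metis atLeastAtMost_iff power_increasing power_one_right)
            then have "s ^ k / L ^ k \<le> s ^ k / L" using L1 s0 by (intro divide_left_mono) auto
            then have "s' ^ k \<le> s ^ k / L" unfolding s'_def by (simp add: power_divide)
            then show "\<bar>cc d Q k\<bar> * s' ^ k \<le> \<bar>cc d Q k\<bar> * s ^ k / L"
              by (metis abs_ge_zero mult_left_mono times_divide_eq_right)
          qed
          have "K1 * (\<Sum>k\<in>{1..d}. \<bar>cc d Q k\<bar> * s' ^ k) \<le> K1 * (d * t / L)"
            using Vs Vs' K10 L1 by (intro mult_left_mono order_trans[OF Vs'] divide_right_mono) auto
          also have "\<dots> < t"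
          proof -
            have "K1 * d * t < L * t" using KL t by simp
            then show ?thesis using L1 by (simp add: field_simps)
          qed
          finally have lt: "(G + 1) * d * (1 + G * d) ^ d * (\<Sum>k\<in>{1..d}. \<bar>cc d Q k\<bar> * s' ^ k) < t"
            unfolding K1_def .
          have "Pr \<le> sqrt 2 * exp (- (s'^2)/4)" unfolding Pr_def by (rule pu) (use s'1 lt in auto)
          also have "\<dots> \<le> C * exp (- (1 / C) * e)"
          proof (intro mult_mono)
            show "sqrt 2 \<le> C" using CA(2) sqrt2_less_2 by linarith
            have "s'^2 = e / L^2" unfolding s'_def using s2 by (simp add: power_divide)
            moreover have "(1 / C) * e \<le> e / (4 * L^2)"
            proof -
              have "0 < 4 * L^2" using L1 by simp
              then have "e / C \<le> e / (4 * L^2)"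
                using CA(3) e0 C0 by (intro divide_left_mono) auto
              then show ?thesis by simp
            qed
            ultimately show "exp (- (s'^2)/4) \<le> exp (- (1 / C) * e)" by simp
          qed (use C0 in auto)
          finally show ?thesis .
        qed
        then show "Pr \<le> C * exp_neg (1 / C) (eta T a t)"
          using eta_e by (simp add: exp_neg_def)
      qed
    qed
    then show "let P = measure gauss {w. \<bar>fsq T a w - integral\<^sup>L gauss (fsq T a)\<bar> \<ge> t}
      in (1 / C) * exp_neg C (eta T a t) \<le> P \<and> P \<le> C * exp_neg (1 / C) (eta T a t)"
      unfolding Let_def seteq Pr_def .
  qed
qed

end
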